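(* Let $(\mathcal V,\mathcal W,\lambda)$ be a FTvN system. Then it comes from a normal decomposition system if and only if it is orbit-transitive, $\mathcal W\subseteq\mathcal V$, and $\lambda^2=\lambda$.
   Context: A Fan-Theobald-von Neumann (FTvN) system is a triple $(\mathcal V,\mathcal W,\lambda)$ where $\mathcal V,\mathcal W$ are real inner product spaces and $\lambda:\mathcal V\to\mathcal W$ is a map such that: (A1) $\|\lambda(x)\|=\|x\|$ for all $x$; (A2) $\langle x,y\rangle\le\langle\lambda(x),\lambda(y)\rangle$ for all $x,y$; (A3) for every $c\in\mathcal V$ and $q\in\lambda(\mathcal V)$ there exists $x$ with $\lambda(x)=q$ and $\langle c,x\rangle=\langle\lambda(c),\lambda(x)\rangle$. An automorphism of the system is an invertible linear map $A:\mathcal V\to\mathcal V$ with $\lambda(Ax)=\lambda(x)$ for all $x$; the set of automorphisms is $\operatorname{Aut}(\mathcal V,\mathcal W,\lambda)$ (a closed subgroup of the orthogonal group $\mathcal O(\mathcal V)$). The system is orbit-transitive if whenever $x,y\in\mathcal V$ with $\lambda(x)=\lambda(y)$ there is $A\in\operatorname{Aut}(\mathcal V,\mathcal W,\lambda)$ with $y=Ax$. A normal decomposition system (NDS) is a triple $(\mathcal V,\mathcal G,\gamma)$ with $\mathcal V$ a real inner product space, $\mathcal G$ a closed subgroup of $\mathcal O(\mathcal V)$ and $\gamma:\mathcal V\to\mathcal V$ such that (a) $\gamma(Ax)=\gamma(x)$ for all $x\in\mathcal V$, $A\in\mathcal G$; (b) for each $x$ there is $A\in\mathcal G$ with $x=A\gamma(x)$;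 (c) $\langle x,y\rangle\le\langle\gamma(x),\gamma(y)\rangle$ for all $x,y$. An NDS $(\mathcal V,\mathcal G,\gamma)$ yields the FTvN system $(\mathcal V,\operatorname{span}(\gamma(\mathcal V)),\gamma)$. The FTvN system $(\mathcal V,\mathcal W,\lambda)$ is said to come from an NDS if $\mathcal W$ is a linear subspace of $\mathcal V$ with the induced inner product and there is a closed subgroup $\mathcal G$ of $\mathcal O(\mathcal V)$ such that $(\mathcal V,\mathcal G,\lambda)$ is an NDS (viewing $\lambda$ as a map into $\mathcal V$). *)

theory Defs
  imports "HOL-Analysis.Analysis"
begin

text \<open>All spaces live as linear subspaces of a common ambient real inner product
space of type 'a, with the induced inner product. Maps on V are functions
'a => 'a; to make them extensional we require them to be the identity outside V.\<close>

definition linear_on_sub :: "'a::real_inner set \<Rightarrow> ('a \<Rightarrow> 'a) \<Rightarrow> bool" where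
  "linear_on_sub V A \<longleftrightarrow>
     (\<forall>x\<in>V. \<forall>y\<in>V. A (x + y) = A x + A y) \<and> (\<forall>c. \<forall>x\<in>V. A (c *\<^sub>R x) = c *\<^sub>R A x)"

definition orth_group :: "'a::real_inner set \<Rightarrow> ('a \<Rightarrow> 'a) set" where
  "orth_group V = {A. linear_on_sub V A \<and> bij_betw A V V \<and>
      (\<forall>x\<in>V. \<forall>y\<in>V. inner (A x) (A y) = inner x y) \<and> (\<forall>x. x \<notin> V \<longrightarrow> A x = x)}"

text \<open>Closed subgroup of O(V) (closedness w.r.t. the operator norm topology:
uniform convergence on the unit ball of V).\<close>
definition closed_subgroup_orth :: "'a::real_inner set \<Rightarrow> ('a \<Rightarrow> 'a) set \<Rightarrow> bool" where
  "closed_subgroup_orth V G \<longleftrightarrow>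
     G \<subseteq> orth_group V \<and> (\<lambda>x. x) \<in> G \<and>
     (\<forall>A\<in>G. \<forall>B\<in>G. A \<circ> B \<in> G) \<and>
     (\<forall>A\<in>G. \<exists>B\<in>G. \<forall>x\<in>V. B (A x) = x) \<and>
     (\<forall>f A. (\<forall>n. f n \<in> G) \<and> A \<in> orth_group V \<and>
        (\<forall>e>0. eventually (\<lambda>n. \<forall>x\<in>V. norm x \<le> 1 \<longrightarrow> norm (f n x - A x) \<le> e) sequentially)
        \<longrightarrow> A \<in> G)"

definition ftvn :: "'a::real_inner set \<Rightarrow> 'a set \<Rightarrow> ('a \<Rightarrow> 'a) \<Rightarrow> bool" where
  "ftvn V W lam \<longleftrightarrow> subspace V \<and> subspace W \<and> (\<forall>x\<in>V. lam x \<in> W) \<and>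
     (\<forall>x\<in>V. norm (lam x) = norm x) \<and>
     (\<forall>x\<in>V. \<forall>y\<in>V. inner x y \<le> inner (lam x) (lam y)) \<and>
     (\<forall>c\<in>V. \<forall>q\<in>lam ` V. \<exists>x\<in>V. lam x = q \<and> inner c x = inner (lam c) (lam x))"

definition aut :: "'a::real_inner set \<Rightarrow> ('a \<Rightarrow> 'a) \<Rightarrow> ('a \<Rightarrow> 'a) set" where
  "aut V lam = {A. linear_on_sub V A \<and> bij_betw A V V \<and> (\<forall>x\<in>V. lam (A x) = lam x) \<and>
                  (\<forall>x. x \<notin> V \<longrightarrow> A x = x)}"

definition orbit_transitive :: "'a::real_inner set \<Rightarrow> ('a \<Rightarrow> 'a) \<Rightarrow> bool" where
  "orbit_transitive V lam \<longleftrightarrow> (\<forall>x\<in>V. \<forall>y\<in>V. lam x = lam y \<longrightarrow> (\<exists>A\<in>aut V lam. y = A x))"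

definition nds :: "'a::real_inner set \<Rightarrow> ('a \<Rightarrow> 'a) set \<Rightarrow> ('a \<Rightarrow> 'a) \<Rightarrow> bool" where
  "nds V G gam \<longleftrightarrow> subspace V \<and> closed_subgroup_orth V G \<and> (\<forall>x\<in>V. gam x \<in> V) \<and>
     (\<forall>x\<in>V. \<forall>A\<in>G. gam (A x) = gam x) \<and>
     (\<forall>x\<in>V. \<exists>A\<in>G. x = A (gam x)) \<and>
     (\<forall>x\<in>V. \<forall>y\<in>V. inner x y \<le> inner (gam x) (gam y))"

definition comes_from_nds :: "'a::real_inner set \<Rightarrow> 'a set \<Rightarrow> ('a \<Rightarrow> 'a) \<Rightarrow> bool" where
  "comes_from_nds V W lam \<longleftrightarrow> W \<subseteq> V \<and> (\<exists>G. nds V G lam)"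

end

theory Submission
  imports Defs
begin

lemma sq_norm_diff: "(norm (a - b))\<^sup>2 = (norm a)\<^sup>2 + (norm b)\<^sup>2 - 2 * inner a (b::'a::real_inner)"
  by (simp add: power2_norm_eq_inner inner_diff_left inner_diff_right inner_commute)

lemma lam_lip:
  assumes "ftvn V W lam" "x \<in> V" "y \<in> V"
  shows "norm (lam x - lam y) \<le> norm (x - y)"
proof -
  have n: "norm (lam x) = norm x" "norm (lam y) = norm y"
    and i: "inner x y \<le> inner (lam x) (lam y)"
    using assms unfolding ftvn_def by auto
  have "(norm (lam x - lam y))\<^sup>2 \<le> (norm (x - y))\<^sup>2"
    unfolding sq_norm_diff n using i by simp
  then show ?thesis by (rule power2_le_imp_le) simp
qed

lemma aut_V: "A \<in> aut V lam \<Longrightarrow> x \<in> V \<Longrightarrow> A x \<in> V"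
  unfolding aut_def bij_betw_def by auto

lemma aut_orth:
  assumes f: "ftvn V W lam" and A: "A \<in> aut V lam"
  shows "A \<in> orth_group V"
proof -
  have sV: "subspace V" using f unfolding ftvn_def by auto
  have lin: "linear_on_sub V A" and nl: "\<And>x. x \<in> V \<Longrightarrow> lam (A x) = lam x"
    using A unfolding aut_def by auto
  have nrm: "norm (A x) = norm x" if "x \<in> V" for x
  proof -
    have "norm (A x) = norm (lam (A x))" using f aut_V[OF A that] unfolding ftvn_def by auto
    also have "\<dots> = norm (lam x)" using nl that by simp
    also have "\<dots> = norm x" using f that unfolding ftvn_def by auto
    finally show ?thesis .
  qed
  have "inner (A x) (A y) = inner x y" if "x \<in> V" "y \<in> V" for x y
  proof -
    have xy: "x - y \<in> V" using sV that by (simp add: subspace_diff)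
    have "A ((x - y) + y) = A (x - y) + A y" using lin xy that(2) unfolding linear_on_sub_def
      by blast
    hence "A (x - y) = A x - A y" by (simp add: eq_diff_eq)
    hence "norm (A x - A y) = norm (x - y)" using nrm[OF xy] by simp
    hence "(norm (A x - A y))\<^sup>2 = (norm (x - y))\<^sup>2" by simp
    thus ?thesis unfolding sq_norm_diff using nrm that by simp
  qed
  thus ?thesis using A unfolding aut_def orth_group_def by auto
qed

theorem theorem7p3:
  fixes V W :: "'a::real_inner set" and lam :: "'a \<Rightarrow> 'a"
  assumes "ftvn V W lam"
  shows "comes_from_nds V W lam \<longleftrightarrow>
           orbit_transitive V lam \<and> W \<subseteq> V \<and> (\<forall>x\<in>V. lam (lam x) = lam x)"
proof
  assume "comes_from_nds V W lam"
  then obtain G where WV: "W \<subseteq> V" and n: "nds V G lam" unfolding comes_from_nds_def by auto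
  have sV: "subspace V" and cs: "closed_subgroup_orth V G" and lV: "\<And>x. x \<in> V \<Longrightarrow> lam x \<in> V"
    and inv: "\<And>x A. x \<in> V \<Longrightarrow> A \<in> G \<Longrightarrow> lam (A x) = lam x"
    and dec: "\<And>x. x \<in> V \<Longrightarrow> \<exists>A\<in>G. x = A (lam x)"
    using n unfolding nds_def by auto
  have Gsub: "G \<subseteq> orth_group V" and comp: "\<And>A B. A \<in> G \<Longrightarrow> B \<in> G \<Longrightarrow> A \<circ> B \<in> G"
    and ginv: "\<And>A. A \<in> G \<Longrightarrow> \<exists>B\<in>G. \<forall>x\<in>V. B (A x) = x"
    using cs unfolding closed_subgroup_orth_def by auto
  have Gaut: "A \<in> aut V lam" if "A \<in> G" for A
    using that Gsub inv unfolding orth_group_def aut_def by auto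
  have idem: "\<forall>x\<in>V. lam (lam x) = lam x"
  proof
    fix x assume x: "x \<in> V"
    then obtain A where A: "A \<in> G" "x = A (lam x)" using dec by blast
    have "lam x = lam (A (lam x))" by (rule arg_cong[OF A(2)])
    also have "\<dots> = lam (lam x)" using inv[OF lV[OF x] A(1)] .
    finally show "lam (lam x) = lam x" by simp
  qed
  have "orbit_transitive V lam"
    unfolding orbit_transitive_def
  proof (intro ballI impI)
    fix x y assume x: "x \<in> V" and y: "y \<in> V" and e: "lam x = lam y"
    obtain A where A: "A \<in> G" "x = A (lam x)" using dec x by blast
    obtain B where B: "B \<in> G" "y = B (lam y)" using dec y by blast
    obtain A' where A': "A' \<in> G" "\<forall>x\<in>V. A' (A x) = x" using ginv A(1) by blast
    have "A' x = A' (A (lam x))" by (rule arg_cong[OF A(2)])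
    also have "\<dots> = lam x" using A'(2) lV[OF x] by blast
    finally have "A' x = lam x" .
    hence "y = (B \<circ> A') x" using B e by simp
    moreover have "B \<circ> A' \<in> aut V lam" using Gaut comp B A' by blast
    ultimately show "\<exists>C\<in>aut V lam. y = C x" by blast
  qed
  thus "orbit_transitive V lam \<and> W \<subseteq> V \<and> (\<forall>x\<in>V. lam (lam x) = lam x)"
    using WV idem by blast
next
  assume "orbit_transitive V lam \<and> W \<subseteq> V \<and> (\<forall>x\<in>V. lam (lam x) = lam x)"
  hence ot: "orbit_transitive V lam" and WV: "W \<subseteq> V" and idem: "\<And>x. x \<in> V \<Longrightarrow> lam (lam x) = lam x"
    by auto
  have f: "ftvn V W lam" by fact
  have sV: "subspace V" and lW: "\<And>x. x \<in> V \<Longrightarrow> lam x \<in> W"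
    and ineq: "\<forall>x\<in>V. \<forall>y\<in>V. inner x y \<le> inner (lam x) (lam y)"
    using f unfolding ftvn_def by auto
  have lV: "\<And>x. x \<in> V \<Longrightarrow> lam x \<in> V" using lW WV by auto
  define G where "G = aut V lam"
  have idG: "(\<lambda>x. x) \<in> G" unfolding G_def aut_def linear_on_sub_def by (auto simp: bij_betw_def)
  have compG: "A \<circ> B \<in> G" if "A \<in> G" "B \<in> G" for A B
  proof -
    have lA: "linear_on_sub V A" and lB: "linear_on_sub V B"
      using that unfolding G_def aut_def by auto
    have BV: "\<And>x. x \<in> V \<Longrightarrow> B x \<in> V" using that(2) aut_V unfolding G_def by blast
    have "linear_on_sub V (A \<circ> B)" unfolding linear_on_sub_def
    proof (intro conjI ballI allI)
      fix x y assume x: "x \<in> V" and y: "y \<in> V"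
      have "B (x + y) = B x + B y" using lB x y unfolding linear_on_sub_def by blast
      moreover have "A (B x + B y) = A (B x) + A (B y)" using lA BV[OF x] BV[OF y] unfolding linear_on_sub_def by blast
      ultimately show "(A \<circ> B) (x + y) = (A \<circ> B) x + (A \<circ> B) y" by simp
    next
      fix c x assume x: "x \<in> V"
      have "B (c *\<^sub>R x) = c *\<^sub>R B x" using lB x unfolding linear_on_sub_def by blast
      moreover have "A (c *\<^sub>R B x) = c *\<^sub>R A (B x)" using lA BV[OF x] unfolding linear_on_sub_def by blast
      ultimately show "(A \<circ> B) (c *\<^sub>R x) = c *\<^sub>R (A \<circ> B) x" by simp
    qed
    moreover have "bij_betw (A \<circ> B) V V" using that unfolding G_def aut_def
      using bij_betw_trans by blast
    moreover have "\<forall>x\<in>V. lam ((A \<circ> B) x) = lam x" using that BV unfolding G_def aut_def by simp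
    moreover have "\<forall>x. x \<notin> V \<longrightarrow> (A \<circ> B) x = x" using that unfolding G_def aut_def by simp
    ultimately show ?thesis unfolding G_def aut_def by blast
  qed
  have invG: "\<exists>B\<in>G. \<forall>x\<in>V. B (A x) = x" if A: "A \<in> G" for A
  proof -
    have lin: "linear_on_sub V A" and bij: "bij_betw A V V" and nl: "\<And>x. x \<in> V \<Longrightarrow> lam (A x) = lam x"
      and out: "\<And>x. x \<notin> V \<Longrightarrow> A x = x"
      using A unfolding G_def aut_def by auto
    define B where "B x = (if x \<in> V then inv_into V A x else x)" for x
    have bij': "bij_betw B V V"
    proof -
      have "bij_betw (inv_into V A) V V" by (rule bij_betw_inv_into[OF bij])
      moreover have "\<forall>x\<in>V. B x = inv_into V A x" by (simp add: B_def)
      ultimately show ?thesis using bij_betw_cong[of V B "inv_into V A" V] by simp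
    qed
    have BV: "B x \<in> V" if "x \<in> V" for x using bij' that bij_betwE by blast
    have AB: "A (B x) = x" if "x \<in> V" for x using that bij unfolding B_def
      by (simp add: bij_betw_inv_into_right)
    have BA: "B (A x) = x" if "x \<in> V" for x using that bij unfolding B_def
      by (simp add: bij_betw_imp_inj_on bij_betwE)
    have inj: "inj_on A V" using bij bij_betw_imp_inj_on by blast
    have "linear_on_sub V B" unfolding linear_on_sub_def
    proof (intro conjI ballI allI)
      fix x y assume x: "x \<in> V" and y: "y \<in> V"
      have "A (B x + B y) = A (B x) + A (B y)" using lin BV[OF x] BV[OF y] unfolding linear_on_sub_def by blast
      hence "A (B x + B y) = x + y" using AB[OF x] AB[OF y] by simp
      moreover have "A (B (x + y)) = x + y" using AB subspace_add[OF sV x y] by simp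
      ultimately have e: "A (B (x + y)) = A (B x + B y)" by simp
      show "B (x + y) = B x + B y"
        by (rule inj_onD[OF inj e]) (simp_all add: BV x y subspace_add[OF sV])
    next
      fix c x assume x: "x \<in> V"
      have "A (c *\<^sub>R B x) = c *\<^sub>R A (B x)" using lin BV[OF x] unfolding linear_on_sub_def by blast
      hence "A (c *\<^sub>R B x) = c *\<^sub>R x" using AB[OF x] by simp
      moreover have "A (B (c *\<^sub>R x)) = c *\<^sub>R x" using AB subspace_scale[OF sV x] by simp
      ultimately have e: "A (B (c *\<^sub>R x)) = A (c *\<^sub>R B x)" by simp
      show "B (c *\<^sub>R x) = c *\<^sub>R B x"
        by (rule inj_onD[OF inj e]) (simp_all add: BV x subspace_scale[OF sV])
    qed
    moreover have "lam (B x) = lam x" if "x \<in> V" for x using nl[OF BV[OF that]] AB[OF that] by simp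
    moreover have "\<forall>x. x \<notin> V \<longrightarrow> B x = x" by (simp add: B_def)
    ultimately have "B \<in> G" unfolding G_def aut_def using bij' by blast
    thus ?thesis using BA by blast
  qed
  have closedG: "A \<in> G" if fG: "\<forall>n. fs n \<in> G" and Ao: "A \<in> orth_group V"
    and conv: "\<forall>e>0. eventually (\<lambda>n. \<forall>x\<in>V. norm x \<le> 1 \<longrightarrow> norm (fs n x - A x) \<le> e) sequentially"
    for fs A
  proof -
    have linA: "linear_on_sub V A" and bijA: "bij_betw A V V" and outA: "\<And>x. x \<notin> V \<Longrightarrow> A x = x"
      using Ao unfolding orth_group_def by auto
    have "lam (A x) = lam x" if x: "x \<in> V" for x
    proof -
      define c where "c = 1 / (norm x + 1)"
      have c0: "c > 0" unfolding c_def by (smt (verit) norm_ge_zero divide_pos_pos)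
      have cx: "c *\<^sub>R x \<in> V" using subspace_scale[OF sV x] .
      have ncx: "norm (c *\<^sub>R x) \<le> 1"
      proof -
        have p: "norm x + 1 > 0" by (smt (verit) norm_ge_zero)
        have "norm (c *\<^sub>R x) = norm x / (norm x + 1)" using c0 by (simp add: c_def)
        also have "\<dots> \<le> 1" using p by simp
        finally show ?thesis .
      qed
      have AxV: "A x \<in> V" using bijA x bij_betwE by blast
      have "norm (lam (A x) - lam x) \<le> e" if e: "e > 0" for e
      proof -
        have "eventually (\<lambda>n. \<forall>x\<in>V. norm x \<le> 1 \<longrightarrow> norm (fs n x - A x) \<le> e * c) sequentially"
          using conv mult_pos_pos[OF e c0] by blast
        then obtain N where "\<forall>n\<ge>N. \<forall>x\<in>V. norm x \<le> 1 \<longrightarrow> norm (fs n x - A x) \<le> e * c"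
          unfolding eventually_sequentially by blast
        hence n: "norm (fs N (c *\<^sub>R x) - A (c *\<^sub>R x)) \<le> e * c" using cx ncx by blast
        have fnG: "fs N \<in> aut V lam" using fG G_def by auto
        have lf: "linear_on_sub V (fs N)" using fnG unfolding aut_def by auto
        have l1: "fs N (c *\<^sub>R x) = c *\<^sub>R fs N x" using lf x unfolding linear_on_sub_def by blast
        have l2: "A (c *\<^sub>R x) = c *\<^sub>R A x" using linA x unfolding linear_on_sub_def by blast
        have "fs N (c *\<^sub>R x) - A (c *\<^sub>R x) = c *\<^sub>R (fs N x - A x)"
          unfolding l1 l2 by (simp add: scaleR_diff_right)
        hence "norm (fs N (c *\<^sub>R x) - A (c *\<^sub>R x)) = c * norm (fs N x - A x)" using c0 by simp
        hence "c * norm (fs N x - A x) \<le> e * c" using n by simp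
        hence le: "norm (fs N x - A x) \<le> e" using c0 by (simp add: mult.commute mult_le_cancel_left_pos)
        have "lam (fs N x) = lam x" using fnG x unfolding aut_def by auto
        hence "norm (lam (A x) - lam x) = norm (lam (A x) - lam (fs N x))" by simp
        also have "\<dots> \<le> norm (A x - fs N x)" using lam_lip[OF f AxV aut_V[OF fnG x]] .
        also have "\<dots> = norm (fs N x - A x)" by (rule norm_minus_commute)
        also have "\<dots> \<le> e" by (rule le)
        finally show ?thesis .
      qed
      hence "norm (lam (A x) - lam x) \<le> 0 + e" if "e > 0" for e using that by simp
      hence "norm (lam (A x) - lam x) \<le> 0"
        by (rule field_le_epsilon)
      hence "norm (lam (A x) - lam x) = 0" by simp
      thus ?thesis by simp
    qed
    thus ?thesis unfolding G_def aut_def using linA bijA outA by auto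
  qed
  have Gs: "G \<subseteq> orth_group V" unfolding G_def using aut_orth[OF f] by blast
  have c5: "\<forall>f A. (\<forall>n. f n \<in> G) \<and> A \<in> orth_group V \<and>
        (\<forall>e>0. eventually (\<lambda>n. \<forall>x\<in>V. norm x \<le> 1 \<longrightarrow> norm (f n x - A x) \<le> e) sequentially)
        \<longrightarrow> A \<in> G"
  proof (intro allI impI)
    fix f A assume "(\<forall>n. f n \<in> G) \<and> A \<in> orth_group V \<and>
        (\<forall>e>0. eventually (\<lambda>n. \<forall>x\<in>V. norm x \<le> 1 \<longrightarrow> norm (f n x - A x) \<le> e) sequentially)"
    thus "A \<in> G" using closedG[of f A] by blast
  qed
  have c3: "\<forall>A\<in>G. \<forall>B\<in>G. A \<circ> B \<in> G" using compG by blast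
  have c4: "\<forall>A\<in>G. \<exists>B\<in>G. \<forall>x\<in>V. B (A x) = x" using invG by blast
  have cs: "closed_subgroup_orth V G" unfolding closed_subgroup_orth_def
    using Gs idG c3 c4 c5 by blast
  have dec: "\<forall>x\<in>V. \<exists>A\<in>G. x = A (lam x)"
  proof
    fix x assume x: "x \<in> V"
    have "lam (lam x) = lam x" using idem x .
    moreover have "\<forall>u\<in>V. \<forall>v\<in>V. lam u = lam v \<longrightarrow> (\<exists>A\<in>aut V lam. v = A u)"
      using ot unfolding orbit_transitive_def .
    ultimately obtain A where "A \<in> aut V lam" "x = A (lam x)"
      using lV[OF x] x by blast
    thus "\<exists>A\<in>G. x = A (lam x)" unfolding G_def by blast
  qed
  have inv: "\<forall>x\<in>V. \<forall>A\<in>G. lam (A x) = lam x" unfolding G_def aut_def by blast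
  have "nds V G lam" unfolding nds_def
    using sV cs lV dec ineq inv by blast
  thus "comes_from_nds V W lam" unfolding comes_from_nds_def using WV by blast
qed

end
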